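(* Let $\mathbb{F}=\mathbb{F}_q$ be a finite field with $q$ elements, $m>1$ an integer, and $R=\mathbb{F}^{m\times m}$. Then the normalized homogeneous weight $\omega$ on $R$ is given by \[ \omega(A)=\frac{(-1)^{r+1}q^{\binom{r}{2}}}{\alpha_r(q^m)}+1,\qquad\text{where } r=\mathrm{rk}(A), \] for every $A\in R$.
   Context: $\alpha_r(x)=\prod_{i=0}^{r-1}(x-q^i)$ (so $\alpha_0=1$), and $\binom{r}{2}=r(r-1)/2$. The normalized homogeneous weight on a finite Frobenius ring $R$ is the unique map $\omega:R\to\mathbb{R}$ with $\omega(0)=0$, $\omega(x)=\omega(y)$ whenever $Rx=Ry$, and $\sum_{y\in Rx}\omega(y)=|Rx|$ for every $x\in R\setminus\{0\}$. *)

theory Defs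
  imports "Jordan_Normal_Form.DL_Rank"
begin

definition alpha :: "nat \<Rightarrow> nat \<Rightarrow> real \<Rightarrow> real" where
  "alpha q r x = (\<Prod>i<r. (x - real q ^ i))"

definition mat_left_ideal :: "nat \<Rightarrow> 'a::field mat \<Rightarrow> 'a mat set" where
  "mat_left_ideal m A = {B * A | B. B \<in> carrier_mat m m}"

definition normalized_homogeneous_weight :: "nat \<Rightarrow> ('a::field mat \<Rightarrow> real) \<Rightarrow> bool" where
  "normalized_homogeneous_weight m w \<longleftrightarrow>
     w (0\<^sub>m m m) = 0 \<and>
     (\<forall>x\<in>carrier_mat m m. \<forall>y\<in>carrier_mat m m.
        mat_left_ideal m x = mat_left_ideal m y \<longrightarrow> w x = w y) \<and>
     (\<forall>x\<in>carrier_mat m m. x \<noteq> 0\<^sub>m m m \<longrightarrow>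
        (\<Sum>y\<in>mat_left_ideal m x. w y) = real (card (mat_left_ideal m x)))"

end

theory Submission
  imports Defs
begin


definition Lists :: "nat \<Rightarrow> nat \<Rightarrow> 'a vec list set" where
  "Lists n r = {vs. length vs = r \<and> set vs \<subseteq> carrier_vec n}"

definition Top :: "real \<Rightarrow> nat \<Rightarrow> (nat \<Rightarrow> real) \<Rightarrow> nat \<Rightarrow> real" where
  "Top q n h s = q ^ s * h s + (q ^ n - q ^ s) * h (Suc s)"

lemma Lists_Suc: "Lists n (Suc r) = (\<lambda>(vs,v). vs @ [v]) ` (Lists n r \<times> carrier_vec n :: ('a vec list \<times> 'a vec) set)"
proof
  show "(\<lambda>(vs,v). vs @ [v]) ` (Lists n r \<times> carrier_vec n) \<subseteq> Lists n (Suc r)"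
    by (auto simp: Lists_def)
  show "Lists n (Suc r) \<subseteq> (\<lambda>(vs,v). vs @ [v]) ` (Lists n r \<times> carrier_vec n)"
  proof
    fix xs assume "xs \<in> Lists n (Suc r)"
    then have xs: "length xs = Suc r" "set xs \<subseteq> carrier_vec n" by (auto simp: Lists_def)
    then have ne: "xs \<noteq> []" by auto
    have "xs = butlast xs @ [last xs]" using ne by simp
    moreover have "(butlast xs, last xs) \<in> Lists n r \<times> carrier_vec n"
      using xs ne by (auto simp: Lists_def dest: in_set_butlastD)
    ultimately show "xs \<in> (\<lambda>(vs,v). vs @ [v]) ` (Lists n r \<times> carrier_vec n)"
      by (metis (no_types, lifting) case_prod_conv image_eqI)
  qed
qed

context vec_space begin

lemma li_empty: "lin_indpt {}"
  unfolding lin_dep_def by auto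

lemma max_exists: "finite S \<Longrightarrow> \<exists>U. maximal U (\<lambda>T. T \<subseteq> S \<and> lin_indpt T)"
  using maximal_exists_superset[of S "\<lambda>T. T \<subseteq> S \<and> lin_indpt T" "{}"] li_empty by auto

lemma max_span:
  assumes S: "S \<subseteq> carrier_vec n"
  and M: "maximal U (\<lambda>T. T \<subseteq> S \<and> lin_indpt T)"
  shows "span U = span S"
proof -
  have "lin_indpt U" "U \<subseteq> S" by (metis M maximal_def)+
  show "span U = span S"
  proof (rule ccontr)
    assume "span U \<noteq> span S"
    have "span U \<subseteq> span S" using span_is_monotone \<open>U\<subseteq>S\<close> by metis
    then have "\<not> S \<subseteq> span U" by (meson \<open>U \<subseteq> S\<close> \<open>span U \<noteq> span S\<close> S span_is_submodule
      span_is_subset subset_antisym subset_trans)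
    then obtain s where "s\<in>S" "s \<notin> span U" by blast
    then have "lin_indpt (U\<union>{s})" using lindep_span
      by (meson \<open>U \<subseteq> S\<close> \<open>lin_indpt U\<close> S lin_dep_iff_in_span rev_subsetD span_mem subset_trans)
    have "s\<notin>U" using \<open>U \<subseteq> S\<close> \<open>s \<notin> span U\<close> S span_mem by auto
    then have "(U\<union>{s}) \<subseteq> S \<and> lin_indpt (U\<union>{s})" using \<open>U \<subseteq> S\<close> \<open>lin_indpt (U \<union> {s})\<close> \<open>s \<in> S\<close> by auto
    then have "\<not>maximal U (\<lambda>T. T \<subseteq> S \<and> lin_indpt T)"
      unfolding maximal_def using Un_subset_iff \<open>s \<notin> U\<close> insert_subset  order_refl by auto
    then show False using M by metis
  qed
qed

lemma card_span:
  assumes fin: "finite (UNIV :: 'a set)"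
  and U: "U \<subseteq> carrier_vec n" "finite U" "lin_indpt U"
  shows "card (span U) = card (UNIV :: 'a set) ^ card U"
proof -
  have sp: "span U = (\<lambda>a. lincomb a U) ` (U \<rightarrow>\<^sub>E UNIV)"
  proof -
    have "span U = {lincomb a U | a. a\<in> (U\<rightarrow>UNIV)}" using finite_span[OF U(2)] U(1) by simp
    also have "\<dots> = (\<lambda>a. lincomb a U) ` (U \<rightarrow>\<^sub>E UNIV)"
    proof (auto)
      fix a :: "'a vec \<Rightarrow> 'a"
      have "lincomb a U = lincomb (restrict a U) U"
        by (rule lincomb_cong) (use U in auto)
      then show "lincomb a U \<in> (\<lambda>a. lincomb a U) ` (U \<rightarrow>\<^sub>E UNIV)" by auto
    qed
    finally show ?thesis .
  qed
  have inj: "inj_on (\<lambda>a. lincomb a U) (U \<rightarrow>\<^sub>E UNIV)"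
  proof (rule inj_onI)
    fix a b assume a: "a \<in> U \<rightarrow>\<^sub>E UNIV" and b: "b \<in> U \<rightarrow>\<^sub>E UNIV" and eq: "lincomb a U = lincomb b U"
    have "lincomb (\<lambda>v. a v - b v) U = lincomb a U \<ominus>\<^bsub>V\<^esub> lincomb b U"
      using lincomb_diff[OF U(2), of a b] U(1) by simp
    also have "\<dots> = 0\<^sub>v n" unfolding eq a_minus_def
      using M.r_neg[of "lincomb b U"] lincomb_closed[OF U(1), of b] by simp
    finally have "(\<lambda>v. a v - b v) \<in> U \<rightarrow> {0}"
      using not_lindepD[OF U(3) U(2), of "\<lambda>v. a v - b v"] by auto
    then show "a = b" using a b by (simp add: PiE_def extensional_def fun_eq_iff Pi_def) metis
  qed
  have "card (span U) = card (U \<rightarrow>\<^sub>E (UNIV :: 'a set))" using sp inj card_image by metis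
  also have "\<dots> = card (UNIV :: 'a set) ^ card U" using card_PiE[OF U(2), of "\<lambda>_. UNIV::'a set"] by simp
  finally show ?thesis .
qed


definition dimS :: "'a vec set \<Rightarrow> nat" where
  "dimS S = vectorspace.dim class_ring (span_vs S)"

lemma rank_dimS: "rank A = dimS (set (cols A))"
  unfolding rank_def dimS_def by simp

lemma dimS_cong: "span S = span S' \<Longrightarrow> dimS S = dimS S'"
  unfolding dimS_def by simp

lemma dimS_max:
  assumes "S \<subseteq> carrier_vec n" "finite S" "maximal U (\<lambda>T. T \<subseteq> S \<and> lin_indpt T)"
  shows "dimS S = card U"
  unfolding dimS_def using dim_span[of S U] assms by simp

lemma card_carrier:
  assumes fin: "finite (UNIV :: 'a set)"
  shows "card (carrier_vec n :: 'a vec set) = card (UNIV :: 'a set) ^ n"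
proof -
  have b: "basis (set (unit_vecs n))" by (rule unit_vecs_basis)
  have "card (span (set (unit_vecs n))) = card (UNIV :: 'a set) ^ card (set (unit_vecs n :: 'a vec list))"
    using card_span[OF fin, of "set (unit_vecs n)"] b by (auto simp: basis_def)
  also have "card (set (unit_vecs n :: 'a vec list)) = n" using unit_vecs_distinct distinct_card by fastforce
  finally show ?thesis using span_unit_vecs_is_carrier by simp
qed

lemma finite_carrier:
  assumes fin: "finite (UNIV :: 'a set)"
  shows "finite (carrier_vec n :: 'a vec set)"
proof -
  have "card (UNIV :: 'a set) > 0" using fin by (simp add: finite_UNIV_card_ge_0)
  then have "card (carrier_vec n :: 'a vec set) > 0" using card_carrier[OF fin] by simp
  then show ?thesis using card_ge_0_finite by blast
qed

lemma card_span_dimS: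
  assumes fin: "finite (UNIV :: 'a set)" and S: "S \<subseteq> carrier_vec n" "finite S"
  shows "card (span S) = card (UNIV :: 'a set) ^ dimS S"
proof -
  obtain U where U: "maximal U (\<lambda>T. T \<subseteq> S \<and> lin_indpt T)" using max_exists[OF S(2)] by auto
  have "U \<subseteq> S" "lin_indpt U" using U unfolding maximal_def by auto
  then have "finite U" "U \<subseteq> carrier_vec n" using S finite_subset by auto
  have "card (span S) = card (span U)" using max_span[OF S(1) U] by simp
  also have "\<dots> = card (UNIV :: 'a set) ^ card U" 
    by (rule card_span[OF fin]) (use \<open>finite U\<close> \<open>U \<subseteq> carrier_vec n\<close> \<open>lin_indpt U\<close> in auto)
  finally show ?thesis using dimS_max[OF S U] by simp
qed

lemma dim_step:
  assumes S: "S \<subseteq> carrier_vec n" "finite S" and v: "v \<in> carrier_vec n"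
  shows "dimS (insert v S) = (if v \<in> span S then dimS S else dimS S + 1)"
proof (cases "v \<in> span S")
  case True
  have "span (insert v S) \<subseteq> span S"
    by (rule span_subsetI) (use S True in_own_span[OF S(1)] in auto)
  moreover have "span S \<subseteq> span (insert v S)" by (rule span_is_monotone) auto
  ultimately show ?thesis using True dimS_cong by (metis subset_antisym)
next
  case False
  obtain U where U: "maximal U (\<lambda>T. T \<subseteq> S \<and> lin_indpt T)" using max_exists[OF S(2)] by auto
  have US: "U \<subseteq> S" and li: "lin_indpt U" using U unfolding maximal_def by auto
  then have finU: "finite U" and UC: "U \<subseteq> carrier_vec n" using S finite_subset by auto
  have spU: "span U = span S" using max_span[OF S(1) U] .
  have vU: "v \<notin> U" using False US span_mem[OF S(1)] by auto
  have li2: "lin_indpt (U \<union> {v})" using lin_dep_iff_in_span[OF UC li _ vU] v False spU by auto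
  have M2: "maximal (insert v U) (\<lambda>T. T \<subseteq> insert v S \<and> lin_indpt T)"
    unfolding maximal_def
  proof (intro conjI allI impI)
    show "insert v U \<subseteq> insert v S" using US by auto
    show "lin_indpt (insert v U)" using li2 by simp
    fix B assume B: "insert v U \<subseteq> B \<and> B \<subseteq> insert v S \<and> lin_indpt B"
    show "B = insert v U"
    proof (rule ccontr)
      assume "B \<noteq> insert v U"
      then obtain t where t: "t \<in> B" "t \<notin> insert v U" using B by auto
      then have tS: "t \<in> S" using B by auto
      have liI: "lin_indpt (insert v U)" using li2 by simp
      have "t \<in> span S" using span_mem[OF S(1) tS] .
      then have "t \<in> span (insert v U)" using spU span_is_monotone[of U "insert v U"] by auto
      then have "lin_dep (insert v U \<union> {t})"
        using lin_dep_iff_in_span[OF _ liI _ t(2)] UC v S tS by auto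
      moreover have "insert v U \<union> {t} \<subseteq> B" using B t by auto
      ultimately have "lin_dep B" using supset_ld_is_ld by blast
      then show False using B by auto
    qed
  qed
  have "dimS (insert v S) = card (insert v U)"
    by (rule dimS_max[OF _ _ M2]) (use S v in auto)
  also have "\<dots> = card U + 1" using finU vU by simp
  finally show ?thesis using False dimS_max[OF S U] by simp
qed

lemma sum_step:
  fixes h :: "nat \<Rightarrow> real"
  assumes fin: "finite (UNIV :: 'a set)" and S: "S \<subseteq> carrier_vec n" "finite S"
  shows "(\<Sum>v\<in>carrier_vec n. h (dimS (insert v S))) =
     real (card (UNIV :: 'a set)) ^ dimS S * h (dimS S)
     + (real (card (UNIV :: 'a set)) ^ n - real (card (UNIV :: 'a set)) ^ dimS S) * h (dimS S + 1)"
proof -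
  let ?C = "carrier_vec n :: 'a vec set"
  let ?q = "card (UNIV :: 'a set)"
  have finC: "finite ?C" by (rule finite_carrier[OF fin])
  have spC: "span S \<subseteq> ?C" using span_is_subset2[OF S(1)] by auto
  have "(\<Sum>v\<in>?C. h (dimS (insert v S))) = (\<Sum>v\<in>span S. h (dimS (insert v S))) + (\<Sum>v\<in>?C - span S. h (dimS (insert v S)))"
    using sum.subset_diff[OF spC finC] by (simp add: add.commute)
  also have "(\<Sum>v\<in>span S. h (dimS (insert v S))) = (\<Sum>v\<in>span S. h (dimS S))"
    by (rule sum.cong) (use dim_step[OF S] spC in auto)
  also have "(\<Sum>v\<in>?C - span S. h (dimS (insert v S))) = (\<Sum>v\<in>?C - span S. h (dimS S + 1))"
    by (rule sum.cong) (use dim_step[OF S] in auto)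
  also have "card (span S) = ?q ^ dimS S" by (rule card_span_dimS[OF fin S])
  moreover have "card (?C - span S) = ?q ^ n - ?q ^ dimS S"
    using card_Diff_subset[OF finite_subset[OF spC finC] spC] card_carrier[OF fin] card_span_dimS[OF fin S] by simp
  moreover have "?q ^ dimS S \<le> ?q ^ n" 
    using card_mono[OF finC spC] card_carrier[OF fin] card_span_dimS[OF fin S] by simp
  ultimately show ?thesis by (simp add: of_nat_diff)
qed

lemma dimS_empty: "dimS {} = 0"
  unfolding dimS_def using dim_zero_vs by simp

lemma sum_lists:
  fixes h :: "nat \<Rightarrow> real"
  assumes fin: "finite (UNIV :: 'a set)"
  shows "(\<Sum>vs\<in>Lists n r. h (dimS (set vs))) = ((Top (real (card (UNIV :: 'a set))) n ^^ r) h) 0"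
proof (induction r arbitrary: h)
  case 0
  have "Lists n 0 = {[] :: 'a vec list}" by (auto simp: Lists_def)
  then show ?case by (simp add: dimS_empty)
next
  case (Suc r)
  let ?q = "real (card (UNIV :: 'a set))"
  have inj: "inj_on (\<lambda>(vs,v). vs @ [v]) (Lists n r \<times> carrier_vec n)"
    by (auto simp: inj_on_def)
  have "(\<Sum>vs\<in>Lists n (Suc r). h (dimS (set vs))) = (\<Sum>(vs,v)\<in>Lists n r \<times> carrier_vec n. h (dimS (set (vs @ [v]))))"
    unfolding Lists_Suc by (subst sum.reindex[OF inj]) (simp add: case_prod_unfold)
  also have "\<dots> = (\<Sum>vs\<in>Lists n r. \<Sum>v\<in>carrier_vec n. h (dimS (insert v (set vs))))"
    by (simp add: sum.cartesian_product)
  also have "\<dots> = (\<Sum>vs\<in>Lists n r. Top ?q n h (dimS (set vs)))"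
    by (rule sum.cong[OF refl], subst sum_step[OF fin]) (auto simp: Lists_def Top_def)
  also have "\<dots> = ((Top ?q n ^^ r) (Top ?q n h)) 0" by (rule Suc.IH)
  finally show ?case by (simp only: funpow_Suc_right comp_def)
qed

end


definition ee :: "nat \<Rightarrow> nat \<Rightarrow> nat \<Rightarrow> real" where
  "ee qn n s = (-1) ^ s * real qn ^ (s choose 2) / alpha qn s (real qn ^ n)"

lemma alpha_Suc: "alpha q (Suc s) x = alpha q s x * (x - real q ^ s)"
  unfolding alpha_def by simp

lemma alpha_nz:
  assumes "qn \<ge> 2" "s \<le> n" shows "alpha qn s (real qn ^ n) \<noteq> 0"
proof -
  have h: "real qn ^ n - real qn ^ i \<noteq> 0" if "i < s" for i
  proof -
    have "i < n" using assms that by auto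
    then have "real qn ^ i < real qn ^ n" using assms by (intro power_strict_increasing) auto
    then show ?thesis by simp
  qed
  show ?thesis unfolding alpha_def using h by (simp add: prod_zero_iff)
qed

lemma Top_ee:
  assumes q: "qn \<ge> 2" and s: "s < n"
  shows "Top (real qn) n (ee qn n) s = 0"
proof -
  let ?q = "real qn"
  let ?a = "alpha qn s (?q ^ n)"
  have a: "?a \<noteq> 0" using alpha_nz[OF q] s by simp
  have d: "?q ^ n - ?q ^ s \<noteq> 0"
  proof -
    have "?q ^ s < ?q ^ n" using q s by (intro power_strict_increasing) auto
    then show ?thesis by simp
  qed
  have c: "Suc s choose 2 = (s choose 2) + s"
    by (cases s) (auto simp: choose_two)
  have "ee qn n (Suc s) = - ((-1) ^ s * ?q ^ (s choose 2) * ?q ^ s) / (?a * (?q ^ n - ?q ^ s))"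
    unfolding ee_def alpha_Suc c by (simp add: power_add)
  then have "(?q ^ n - ?q ^ s) * ee qn n (Suc s) = -(?q ^ s * ee qn n s)"
    using a d unfolding ee_def by (simp add: field_simps)
  then show ?thesis unfolding Top_def by simp
qed

lemma Top_vanish:
  assumes q: "qn \<ge> 2"
  shows "s + Suc k \<le> n \<Longrightarrow> (Top (real qn) n ^^ Suc k) (ee qn n) s = 0"
proof (induction k arbitrary: s)
  case 0
  then show ?case using Top_ee[OF q] by simp
next
  case (Suc k)
  have "(Top (real qn) n ^^ Suc (Suc k)) (ee qn n) s = Top (real qn) n ((Top (real qn) n ^^ Suc k) (ee qn n)) s"
    by simp
  also have "\<dots> = 0"
  proof -
    have a1: "(Top (real qn) n ^^ Suc k) (ee qn n) s = 0" using Suc.IH[of s] Suc.prems by simp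
    have a2: "(Top (real qn) n ^^ Suc k) (ee qn n) (Suc s) = 0" using Suc.IH[of "Suc s"] Suc.prems by simp
    show ?thesis unfolding Top_def[of "real qn" n "(Top (real qn) n ^^ Suc k) (ee qn n)" s] a1 a2 by simp
  qed
  finally show ?case .
qed

lemma Top_lin: "(Top q n ^^ k) (\<lambda>s. 1 - g s) = (\<lambda>s. (q ^ n) ^ k - (Top q n ^^ k) g s)"
proof (induction k)
  case 0 then show ?case by simp
next
  case (Suc k)
  show ?case unfolding funpow.simps comp_def Suc.IH by (simp add: Top_def fun_eq_iff algebra_simps)
qed

lemma Top_main:
  assumes q: "qn \<ge> 2" and r: "1 \<le> r" "r \<le> n"
  shows "(Top (real qn) n ^^ r) (\<lambda>s. (-1) ^ (s + 1) * real qn ^ (s choose 2) / alpha qn s (real qn ^ n) + 1) 0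
     = (real qn ^ n) ^ r"
proof -
  have eq: "(\<lambda>s. (-1) ^ (s + 1) * real qn ^ (s choose 2) / alpha qn s (real qn ^ n) + 1) = (\<lambda>s. 1 - ee qn n s)"
    by (auto simp: ee_def fun_eq_iff)
  obtain k where k: "r = Suc k" using r by (cases r) auto
  show ?thesis unfolding eq Top_lin using Top_vanish[OF q, of 0 k] k r by simp
qed



context vec_space begin

lemma mv_in_span:
  assumes ws: "set ws \<subseteq> carrier_vec n" and v: "v \<in> carrier_vec (length ws)"
  shows "mat_of_cols n ws *\<^sub>v v \<in> span (set ws)"
proof -
  have "mat_of_cols n ws *\<^sub>v v = lincomb_list (\<lambda>i. v $ i) ws"
  proof -
    have e: "vec (length ws) (\<lambda>i. v $ i) = v" using v by auto
    have d: "\<forall>w\<in>set ws. dim_vec w = n" using ws by auto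
    show ?thesis using lincomb_list_as_mat_mult[of ws "\<lambda>i. v $ i", OF d] e by auto
  qed
  also have "\<dots> \<in> span_list ws" by (rule in_span_listI) auto
  finally show ?thesis using span_list_as_span[OF ws] by simp
qed

lemma ext_basis:
  assumes bs: "set bs \<subseteq> carrier_vec n" "distinct bs" "lin_indpt (set bs)"
  shows "\<exists>M N. M \<in> carrier_mat n n \<and> N \<in> carrier_mat n n \<and> N * M = 1\<^sub>m n \<and> (\<forall>i<length bs. col M i = bs ! i)"
proof -
  let ?S = "set bs \<union> set (unit_vecs n)"
  have SC: "?S \<subseteq> carrier_vec n" using bs by (auto simp: unit_vecs_def)
  obtain M' where M': "finite M'" "maximal M' (\<lambda>T. T \<subseteq> ?S \<and> lin_indpt T)" "set bs \<subseteq> M'"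
    using maximal_exists_superset[of ?S "\<lambda>T. T \<subseteq> ?S \<and> lin_indpt T" "set bs"] bs by auto
  have M'S: "M' \<subseteq> ?S" and liM: "lin_indpt M'" using M'(2) unfolding maximal_def by auto
  have M'C: "M' \<subseteq> carrier_vec n" using M'S SC by auto
  have "span M' = span ?S" by (rule max_span[OF SC M'(2)])
  moreover have "span (set (unit_vecs n)) \<subseteq> span ?S" by (rule span_is_monotone) auto
  ultimately have "carrier_vec n \<subseteq> span M'" using span_unit_vecs_is_carrier by auto
  moreover have "span M' \<subseteq> carrier_vec n" using span_is_subset2[OF M'C] by auto
  ultimately have gen: "span M' = carrier_vec n" by auto
  have "basis M'" unfolding basis_def using gen liM M'C by auto
  then have cardM: "card M' = n" using dim_basis[OF M'(1)] dim_is_n by simp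
  obtain rest where rest: "distinct rest" "set rest = M' - set bs"
    using finite_distinct_list[of "M' - set bs"] M'(1) by auto
  define ms where "ms = bs @ rest"
  have ms: "distinct ms" "set ms = M'" using rest bs M'(3) by (auto simp: ms_def)
  then have lms: "length ms = n" using cardM distinct_card by metis
  define Mt where "Mt = mat_of_cols n ms"
  have Mt: "Mt \<in> carrier_mat n n" using lms mat_of_cols_carrier(1)[of n ms] by (simp add: Mt_def)
  have cMt: "cols Mt = ms" using ms M'C by (simp add: Mt_def)
  have "rank Mt = n" using lin_indpt_full_rank[OF Mt] cMt ms liM by simp
  then have "det Mt \<noteq> 0" using det_rank_iff[OF Mt] by simp
  then obtain N where N: "N \<in> carrier_mat n n" "N * Mt = 1\<^sub>m n"
    using det_non_zero_imp_unit[OF Mt, of n] unfolding Units_def ring_mat_def by auto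
  have "\<forall>i<length bs. col Mt i = bs ! i"
  proof (intro allI impI)
    fix i assume i: "i < length bs"
    have "col Mt i = cols Mt ! i" using i lms Mt by (simp add: ms_def)
    then show "col Mt i = bs ! i" using i cMt by (simp add: ms_def nth_append)
  qed
  then show ?thesis using Mt N by blast
qed

end


context vec_space begin

lemma dimS_le: "set ws \<subseteq> carrier_vec n \<Longrightarrow> dimS (set ws) \<le> length ws"
  using rank_le_nc[of "mat_of_cols n ws" "length ws"] rank_dimS[of "mat_of_cols n ws"] by simp

lemma ideal_struct:
  assumes fin: "finite (UNIV :: 'a set)" and x: "x \<in> carrier_mat n n"
  shows "\<exists>\<Phi>. bij_betw \<Phi> {B * x | B. B \<in> carrier_mat n n} (Lists n (rank x)) \<and>
     (\<forall>y\<in>{B * x | B. B \<in> carrier_mat n n}. rank y = dimS (set (\<Phi> y)))"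
proof -
  let ?R = "{B * x | B. B \<in> carrier_mat n n}"
  have cx: "set (cols x) \<subseteq> carrier_vec n" using x cols_dim by (metis carrier_matD(1))
  obtain U where U: "maximal U (\<lambda>T. T \<subseteq> set (cols x) \<and> lin_indpt T)" using max_exists by blast
  have US: "U \<subseteq> set (cols x)" and liU: "lin_indpt U" using U unfolding maximal_def by auto
  have r: "rank x = card U" using rank_card_indpt[OF x U] .
  have finU: "finite U" using US finite_subset by blast
  obtain bs where bs: "distinct bs" "set bs = U" using finite_distinct_list[OF finU] by auto
  have lbs: "length bs = rank x" using r bs distinct_card by metis
  have bsC: "set bs \<subseteq> carrier_vec n" using bs US cx by auto
  define r' where "r' = rank x"
  define js where "js = map (\<lambda>b. SOME k. k < n \<and> col x k = b) bs"
  have js: "js ! i < n \<and> col x (js ! i) = bs ! i" if i: "i < length bs" for i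
  proof -
    have "bs ! i \<in> set (cols x)" using i bs US nth_mem by blast
    then obtain k where "k < n" "col x k = bs ! i" using x
      by (metis carrier_matD(2) cols_length cols_nth in_set_conv_nth)
    then have "\<exists>k. k < n \<and> col x k = bs ! i" by blast
    from someI_ex[OF this] show ?thesis using i by (simp add: js_def)
  qed
  have ljs: "length js = length bs" by (simp add: js_def)
  define X where "X = mat_of_cols n bs"
  have X: "X \<in> carrier_mat n r'" using lbs mat_of_cols_carrier(1)[of n bs] by (simp add: X_def r'_def)
  have cX: "cols X = bs" using bsC by (simp add: X_def)
  have colX: "col X i = bs ! i" if "i < length bs" for i using that bsC nth_mem
    unfolding X_def by (intro col_mat_of_cols) auto
  have spanU: "span U = span (set (cols x))" by (rule max_span[OF cx U])
  have rep: "\<exists>c. c \<in> carrier_vec r' \<and> col x k = X *\<^sub>v c" if k: "k < n" for k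
  proof -
    have "col x k \<in> set (cols x)" using k x by (metis carrier_matD(2) cols_length cols_nth nth_mem)
    then have "col x k \<in> span U" using spanU span_mem[OF cx] by auto
    then obtain a where a: "lincomb a U = col x k"
      using finite_in_span[OF finU] US cx by blast
    have "X *\<^sub>v vec r' (\<lambda>i. a (col X i)) = lincomb a (set (cols X))"
      using mat_mult_eq_lincomb[OF X] cX bs by simp
    then show ?thesis using a cX bs by (intro exI[of _ "vec r' (\<lambda>i. a (col X i))"]) auto
  qed
  define c where "c k = (SOME c. c \<in> carrier_vec r' \<and> col x k = X *\<^sub>v c)" for k
  have c: "c k \<in> carrier_vec r' \<and> col x k = X *\<^sub>v c k" if "k < n" for k
    using someI_ex[OF rep[OF that]] by (simp add: c_def)
  obtain M N where MN: "M \<in> carrier_mat n n" "N \<in> carrier_mat n n" "N * M = 1\<^sub>m n"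
    "\<forall>i<length bs. col M i = bs ! i"
    using ext_basis[OF bsC bs(1)] liU bs by auto
  define \<Phi> where "\<Phi> y = map (\<lambda>j. col y j) js" for y :: "'a mat"
  have Phi_nth: "\<Phi> (B * x) ! i = B *\<^sub>v bs ! i" if B: "B \<in> carrier_mat n n" and i: "i < length bs" for B i
  proof -
    have "\<Phi> (B * x) ! i = col (B * x) (js ! i)" using i ljs by (simp add: \<Phi>_def)
    also have "\<dots> = B *\<^sub>v col x (js ! i)"
      by (rule col_mult2[OF B x]) (use js[OF i] in auto)
    also have "\<dots> = B *\<^sub>v bs ! i" using js[OF i] by simp
    finally show ?thesis .
  qed
  have lPhi: "length (\<Phi> y) = r'" for y by (simp add: \<Phi>_def ljs lbs r'_def)
  have PhiX: "mat_of_cols n (\<Phi> (B * x)) = B * X" if B: "B \<in> carrier_mat n n" for B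
  proof -
    have "cols (B * X) = \<Phi> (B * x)"
    proof (rule nth_equalityI)
      show "length (cols (B * X)) = length (\<Phi> (B * x))" using X lPhi by simp
      fix i assume "i < length (cols (B * X))"
      then have i: "i < length bs" using X lbs r'_def by simp
      have iX: "i < dim_col (B * X)" using i X lbs r'_def by simp
      have "cols (B * X) ! i = col (B * X) i" using iX by (rule cols_nth)
      also have "\<dots> = B *\<^sub>v col X i"
        by (rule col_mult2[OF B X]) (use i lbs r'_def in auto)
      also have "\<dots> = \<Phi> (B * x) ! i" using Phi_nth[OF B i] colX[OF i] by simp
      finally show "cols (B * X) ! i = \<Phi> (B * x) ! i" .
    qed
    then show ?thesis using mat_of_cols_cols[of "B * X"] B by simp
  qed
  have colBx: "col (B * x) k = mat_of_cols n (\<Phi> (B * x)) *\<^sub>v c k" if B: "B \<in> carrier_mat n n" and k: "k < n" for B k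
  proof -
    have "col (B * x) k = B *\<^sub>v col x k" by (rule col_mult2[OF B x k])
    also have "\<dots> = B *\<^sub>v (X *\<^sub>v c k)" using c[OF k] by simp
    also have "\<dots> = (B * X) *\<^sub>v c k" using B X c[OF k] by simp
    finally show ?thesis using PhiX[OF B] by simp
  qed
  have PhiC: "set (\<Phi> (B * x)) \<subseteq> carrier_vec n" if B: "B \<in> carrier_mat n n" for B
  proof
    fix v assume "v \<in> set (\<Phi> (B * x))"
    then obtain j where "v = col (B * x) j" by (auto simp: \<Phi>_def)
    then show "v \<in> carrier_vec n" using col_dim[of "B * x" j] B by simp
  qed
  have rk: "rank (B * x) = dimS (set (\<Phi> (B * x)))" if B: "B \<in> carrier_mat n n" for B
  proof -
    have Bx: "B * x \<in> carrier_mat n n" using B x by simp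
    have s1: "set (cols (B * x)) \<subseteq> span (set (\<Phi> (B * x)))"
    proof
      fix v assume "v \<in> set (cols (B * x))"
      then obtain k where k: "k < n" "v = col (B * x) k" using Bx
        by (metis carrier_matD(2) cols_length cols_nth in_set_conv_nth)
      show "v \<in> span (set (\<Phi> (B * x)))" unfolding k colBx[OF B k(1)]
        by (rule mv_in_span[OF PhiC[OF B]]) (use c[OF k(1)] lPhi in auto)
    qed
    have s2: "set (\<Phi> (B * x)) \<subseteq> set (cols (B * x))"
    proof
      fix v assume "v \<in> set (\<Phi> (B * x))"
      then obtain i where i: "i < length bs" "v = col (B * x) (js ! i)"
        using ljs by (auto simp: \<Phi>_def in_set_conv_nth)
      have "js ! i < dim_col (B * x)" using js[OF i(1)] x by simp
      then show "v \<in> set (cols (B * x))" using i(2) by (metis cols_length cols_nth nth_mem)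
    qed
    have "span (set (cols (B * x))) \<subseteq> span (set (\<Phi> (B * x)))"
      by (rule span_subsetI[OF PhiC[OF B] s1])
    moreover have "span (set (\<Phi> (B * x))) \<subseteq> span (set (cols (B * x)))"
      by (rule span_is_monotone[OF s2])
    ultimately have "span (set (cols (B * x))) = span (set (\<Phi> (B * x)))" by (rule subset_antisym)
    then show ?thesis unfolding rank_dimS by (rule dimS_cong)
  qed
  have bij: "bij_betw \<Phi> ?R (Lists n r')"
  proof (rule bij_betwI')
    fix y1 y2 assume y1: "y1 \<in> ?R" and y2: "y2 \<in> ?R"
    then obtain B1 B2 where B: "B1 \<in> carrier_mat n n" "y1 = B1 * x" "B2 \<in> carrier_mat n n" "y2 = B2 * x" by auto
    show "(\<Phi> y1 = \<Phi> y2) = (y1 = y2)"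
    proof
      assume eq: "\<Phi> y1 = \<Phi> y2"
      show "y1 = y2"
      proof (rule mat_col_eqI)
        show "dim_row y1 = dim_row y2" "dim_col y1 = dim_col y2" using B x by auto
        fix k assume "k < dim_col y2"
        then have k: "k < n" using B x by auto
        show "col y1 k = col y2 k" using colBx[OF B(1) k] colBx[OF B(3) k] eq B by simp
      qed
    qed simp
  next
    fix y assume "y \<in> ?R"
    then obtain B where B: "B \<in> carrier_mat n n" "y = B * x" by auto
    show "\<Phi> y \<in> Lists n r'" using PhiC[OF B(1)] lPhi B by (simp add: Lists_def)
  next
    fix ws :: "'a vec list" assume ws: "ws \<in> Lists n r'"
    then have wsC: "set ws \<subseteq> carrier_vec n" and lws: "length ws = r'" by (auto simp: Lists_def)
    have rn: "r' \<le> n" using rank_le_nc[OF x] by (simp add: r'_def)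
    define W where "W = mat_of_cols n (ws @ replicate (n - r') (0\<^sub>v n))"
    have W: "W \<in> carrier_mat n n" using lws rn mat_of_cols_carrier(1)[of n "ws @ replicate (n - r') (0\<^sub>v n)"]
      by (simp add: W_def)
    define B where "B = W * N"
    have B: "B \<in> carrier_mat n n" using W MN by (simp add: B_def)
    have "\<Phi> (B * x) = ws"
    proof (rule nth_equalityI)
      show "length (\<Phi> (B * x)) = length ws" using lPhi lws by simp
      fix i assume "i < length (\<Phi> (B * x))"
      then have i: "i < length bs" using lPhi lbs r'_def by simp
      have iM: "i < n" using i lbs rn r'_def by simp
      have "\<Phi> (B * x) ! i = B *\<^sub>v col M i" using Phi_nth[OF B i] MN(4) i by simp
      also have "\<dots> = col (B * M) i" by (rule col_mult2[OF B MN(1) iM, symmetric])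
      also have "B * M = W" using W MN by (simp add: B_def assoc_mult_mat[OF W MN(2) MN(1)])
      also have "col W i = ws ! i"
      proof -
        have il: "i < length ws" using i lbs lws r'_def by simp
        then have "(ws @ replicate (n - r') (0\<^sub>v n)) ! i = ws ! i" by (simp add: nth_append)
        moreover have "ws ! i \<in> carrier_vec n" using il wsC nth_mem by blast
        ultimately show ?thesis unfolding W_def using il
          by (subst col_mat_of_cols) auto
      qed
      finally show "\<Phi> (B * x) ! i = ws ! i" .
    qed
    then show "\<exists>y\<in>?R. ws = \<Phi> y" using B by blast
  qed
  show ?thesis using bij rk r'_def by blast
qed

end


lemma Top_zero: "(Top q n ^^ k) (\<lambda>_. 0) = (\<lambda>_. 0)"
  by (induction k) (auto simp: Top_def)

lemma Top_one: "(Top q n ^^ k) (\<lambda>_. 1) s = (q ^ n) ^ k"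
  using Top_lin[where g="\<lambda>_. 0" and q=q and n=n and k=k] Top_zero[where q=q and n=n and k=k] by (simp add: fun_eq_iff)

context vec_space begin

lemma finite_Lists: "finite (UNIV :: 'a set) \<Longrightarrow> finite (Lists n r :: 'a vec list set)"
  unfolding Lists_def using finite_lists_length_eq[OF finite_carrier, of r] by (simp add: conj_commute)

lemma ideal_sum:
  fixes h :: "nat \<Rightarrow> real"
  assumes fin: "finite (UNIV :: 'a set)" and x: "x \<in> carrier_mat n n"
  shows "(\<Sum>y\<in>mat_left_ideal n x. h (rank y)) = ((Top (real (card (UNIV :: 'a set))) n ^^ rank x) h) 0"
    "\<forall>y\<in>mat_left_ideal n x. rank y \<le> rank x"
    "card (mat_left_ideal n x) = card (Lists n (rank x) :: 'a vec list set)"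
    "finite (mat_left_ideal n x)"
proof -
  obtain \<Phi> where P: "bij_betw \<Phi> (mat_left_ideal n x) (Lists n (rank x))"
     "\<forall>y\<in>mat_left_ideal n x. rank y = dimS (set (\<Phi> y))"
    using ideal_struct[OF fin x] unfolding mat_left_ideal_def by blast
  have "(\<Sum>y\<in>mat_left_ideal n x. h (rank y)) = (\<Sum>y\<in>mat_left_ideal n x. h (dimS (set (\<Phi> y))))"
    using P(2) by simp
  also have "\<dots> = (\<Sum>ws\<in>Lists n (rank x). h (dimS (set ws)))"
    using sum.reindex_bij_betw[OF P(1), of "\<lambda>ws. h (dimS (set ws))"] by simp
  also have "\<dots> = ((Top (real (card (UNIV :: 'a set))) n ^^ rank x) h) 0" by (rule sum_lists[OF fin])
  finally show "(\<Sum>y\<in>mat_left_ideal n x. h (rank y)) = ((Top (real (card (UNIV :: 'a set))) n ^^ rank x) h) 0" .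
  show "\<forall>y\<in>mat_left_ideal n x. rank y \<le> rank x"
  proof
    fix y assume y: "y \<in> mat_left_ideal n x"
    then have "\<Phi> y \<in> (Lists n (rank x) :: 'a vec list set)" using P(1) bij_betwE by blast
    then show "rank y \<le> rank x" using P(2) y dimS_le[of "\<Phi> y"] by (auto simp: Lists_def)
  qed
  show "card (mat_left_ideal n x) = card (Lists n (rank x) :: 'a vec list set)"
    using bij_betw_same_card[OF P(1)] .
  show "finite (mat_left_ideal n x)" using bij_betw_finite[OF P(1)] finite_Lists[OF fin] by simp
qed

end

lemma ideal_carrier: "mat_left_ideal m x \<subseteq> carrier_mat m m"
  if "x \<in> carrier_mat m m" using that by (auto simp: mat_left_ideal_def)

lemma ideal_self: "x \<in> carrier_mat m m \<Longrightarrow> x \<in> mat_left_ideal m x"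
  unfolding mat_left_ideal_def by (intro CollectI exI[of _ "1\<^sub>m m"]) auto

lemma ideal_trans: fixes x y :: "'a::field mat" shows "x \<in> carrier_mat m m \<Longrightarrow> y \<in> mat_left_ideal m x \<Longrightarrow> mat_left_ideal m y \<subseteq> mat_left_ideal m x"
  unfolding mat_left_ideal_def
proof clarify
  fix B C :: "'a mat" assume x: "x \<in> carrier_mat m m" and B: "B \<in> carrier_mat m m" and C: "C \<in> carrier_mat m m"
  show "\<exists>B'. C * (B * x) = B' * x \<and> B' \<in> carrier_mat m m"
    by (intro exI[of _ "C * B"]) (use x B C in \<open>auto simp: assoc_mult_mat\<close>)
qed

lemma uniqueness:
  assumes fin: "\<And>x :: 'a::field mat. x \<in> carrier_mat m m \<Longrightarrow> finite (mat_left_ideal m x)"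
    and w: "normalized_homogeneous_weight m (w :: 'a mat \<Rightarrow> real)"
    and w': "normalized_homogeneous_weight m w'"
  shows "x \<in> carrier_mat m m \<Longrightarrow> w x = w' x"
proof (induction "card (mat_left_ideal m x)" arbitrary: x rule: less_induct)
  case less
  note x = less.prems
  let ?I = "mat_left_ideal m x"
  show ?case
  proof (cases "x = 0\<^sub>m m m")
    case True
    then show ?thesis using w w' unfolding normalized_homogeneous_weight_def by simp
  next
    case False
    let ?G = "{y\<in>?I. mat_left_ideal m y = ?I}"
    let ?P = "?I - ?G"
    have finI: "finite ?I" using fin[OF x] .
    have GI: "?G \<subseteq> ?I" by auto
    have IC: "?I \<subseteq> carrier_mat m m" using ideal_carrier[OF x] .
    have sw: "(\<Sum>y\<in>?I. w y) = (\<Sum>y\<in>?I. w' y)"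
      using w w' False x unfolding normalized_homogeneous_weight_def by simp
    have inv: "\<And>u v. u \<in> carrier_mat m m \<Longrightarrow> v \<in> carrier_mat m m \<Longrightarrow> mat_left_ideal m u = mat_left_ideal m v \<Longrightarrow> w u = w v \<and> w' u = w' v"
      using w w' unfolding normalized_homogeneous_weight_def by blast
    have sG: "(\<Sum>y\<in>?G. w y) = real (card ?G) * w x" "(\<Sum>y\<in>?G. w' y) = real (card ?G) * w' x"
    proof -
      have "(\<Sum>y\<in>?G. w y) = (\<Sum>y\<in>?G. w x)"
        by (rule sum.cong[OF refl]) (use inv x IC in blast)
      then show "(\<Sum>y\<in>?G. w y) = real (card ?G) * w x" by simp
      have "(\<Sum>y\<in>?G. w' y) = (\<Sum>y\<in>?G. w' x)"
        by (rule sum.cong[OF refl]) (use inv x IC in blast)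
      then show "(\<Sum>y\<in>?G. w' y) = real (card ?G) * w' x" by simp
    qed
    have sP: "(\<Sum>y\<in>?P. w y) = (\<Sum>y\<in>?P. w' y)"
    proof (rule sum.cong[OF refl])
      fix y assume y: "y \<in> ?P"
      then have yI: "y \<in> ?I" and ne: "mat_left_ideal m y \<noteq> ?I" by auto
      have yC: "y \<in> carrier_mat m m" using yI IC by auto
      have "mat_left_ideal m y \<subset> ?I" using ideal_trans[OF x yI] ne by auto
      then have "card (mat_left_ideal m y) < card ?I" using finI psubset_card_mono by blast
      then show "w y = w' y" using less.hyps yC by blast
    qed
    have s1: "(\<Sum>y\<in>?I. w y) = (\<Sum>y\<in>?G. w y) + (\<Sum>y\<in>?P. w y)"
      using sum.subset_diff[OF GI finI] by (simp add: add.commute)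
    have s2: "(\<Sum>y\<in>?I. w' y) = (\<Sum>y\<in>?G. w' y) + (\<Sum>y\<in>?P. w' y)"
      using sum.subset_diff[OF GI finI] by (simp add: add.commute)
    have "real (card ?G) * w x = real (card ?G) * w' x"
      using s1 s2 sw sG sP by linarith
    moreover have "card ?G > 0"
      using ideal_self[OF x] finite_subset[OF GI finI] card_gt_0_iff by blast
    ultimately show ?thesis by simp
  qed
qed



theorem theorem3p2:
  fixes w :: "'a::field mat \<Rightarrow> real" and m q :: nat
  assumes "finite (UNIV :: 'a set)"
    and "q = card (UNIV :: 'a set)"
    and "m > 1"
  shows "normalized_homogeneous_weight m w \<longleftrightarrow>
    (\<forall>A\<in>carrier_mat m m.
       w A = (let r = vec_space.rank m A in
               (-1) ^ (r + 1) * real q ^ (r choose 2) / alpha q r (real q ^ m) + 1))"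
proof -
  note fin = assms(1)
  define fr where "fr s = (-1) ^ (s + 1) * real q ^ (s choose 2) / alpha q s (real q ^ m) + (1::real)" for s
  define W0 where "W0 A = fr (vec_space.rank m A)" for A :: "'a mat"
  have W0': "W0 A = (let r = vec_space.rank m A in
               (-1) ^ (r + 1) * real q ^ (r choose 2) / alpha q r (real q ^ m) + 1)" for A
    by (simp add: W0_def fr_def Let_def)
  have q2: "q \<ge> 2"
  proof -
    have "card {0::'a, 1} \<le> card (UNIV :: 'a set)" by (rule card_mono[OF fin]) auto
    then show ?thesis using assms(2) by simp
  qed
  have finI: "\<And>x :: 'a mat. x \<in> carrier_mat m m \<Longrightarrow> finite (mat_left_ideal m x)"
    using vec_space.ideal_sum(4)[OF fin] by blast
  have NW0: "normalized_homogeneous_weight m W0"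
    unfolding normalized_homogeneous_weight_def
  proof (intro conjI ballI impI)
    have r0: "vec_space.rank m (0\<^sub>m m m :: 'a mat) = 0" by (rule vec_space.rank_0I)
    show "W0 (0\<^sub>m m m) = 0" unfolding W0_def r0 by (simp add: fr_def alpha_def choose_two)
  next
    fix x y :: "'a mat" assume x: "x \<in> carrier_mat m m" and y: "y \<in> carrier_mat m m"
      and eq: "mat_left_ideal m x = mat_left_ideal m y"
    have "vec_space.rank m x \<le> vec_space.rank m y"
      using vec_space.ideal_sum(2)[OF fin y] ideal_self[OF x] eq by blast
    moreover have "vec_space.rank m y \<le> vec_space.rank m x"
      using vec_space.ideal_sum(2)[OF fin x] ideal_self[OF y] eq by blast
    ultimately show "W0 x = W0 y" by (simp add: W0_def)
  next
    fix x :: "'a mat" assume x: "x \<in> carrier_mat m m" and nz: "x \<noteq> 0\<^sub>m m m"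
    let ?r = "vec_space.rank m x"
    let ?I = "mat_left_ideal m x"
    have r1: "1 \<le> ?r"
    proof (rule ccontr)
      assume "\<not> 1 \<le> ?r"
      then have r0: "?r = 0" by simp
      have "Lists m 0 = {[] :: 'a vec list}" by (auto simp: Lists_def)
      then have c1: "card ?I = 1" using vec_space.ideal_sum(3)[OF fin x] r0 by simp
      have "0\<^sub>m m m \<in> ?I" unfolding mat_left_ideal_def
        by (intro CollectI exI[of _ "0\<^sub>m m m"]) (use x in auto)
      moreover have "x \<in> ?I" using ideal_self[OF x] .
      ultimately show False using c1 nz by (metis card_1_singletonE singletonD)
    qed
    have rm: "?r \<le> m" using vec_space.rank_le_nc[OF x] .
    have "(\<Sum>y\<in>?I. W0 y) = ((Top (real q) m ^^ ?r) fr) 0"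
      unfolding W0_def using vec_space.ideal_sum(1)[OF fin x, of fr] assms(2) by simp
    also have "\<dots> = (real q ^ m) ^ ?r"
      unfolding fr_def using Top_main[OF q2 r1 rm] by simp
    also have "\<dots> = real (card ?I)"
      using vec_space.ideal_sum(1)[OF fin x, of "\<lambda>_. 1"] Top_one[where q="real q" and n=m and k="?r" and s=0] assms(2) by simp
    finally show "(\<Sum>y\<in>?I. W0 y) = real (card ?I)" .
  qed
  show ?thesis
  proof
    assume w: "normalized_homogeneous_weight m w"
    show "\<forall>A\<in>carrier_mat m m. w A = (let r = vec_space.rank m A in
               (-1) ^ (r + 1) * real q ^ (r choose 2) / alpha q r (real q ^ m) + 1)"
      using uniqueness[OF finI w NW0] W0' by simp
  next
    assume H: "\<forall>A\<in>carrier_mat m m. w A = (let r = vec_space.rank m A in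
               (-1) ^ (r + 1) * real q ^ (r choose 2) / alpha q r (real q ^ m) + 1)"
    then have eqw: "\<And>A. A \<in> carrier_mat m m \<Longrightarrow> w A = W0 A" using W0' by simp
    show "normalized_homogeneous_weight m w"
      unfolding normalized_homogeneous_weight_def
    proof (intro conjI ballI impI)
      show "w (0\<^sub>m m m) = 0" using eqw[of "0\<^sub>m m m"] NW0 unfolding normalized_homogeneous_weight_def by simp
    next
      fix x y :: "'a mat" assume x: "x \<in> carrier_mat m m" and y: "y \<in> carrier_mat m m"
        and eq: "mat_left_ideal m x = mat_left_ideal m y"
      have "W0 x = W0 y" using NW0 x y eq unfolding normalized_homogeneous_weight_def by blast
      then show "w x = w y" using eqw x y by simp
    next
      fix x :: "'a mat" assume x: "x \<in> carrier_mat m m" and nz: "x \<noteq> 0\<^sub>m m m"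
      have "(\<Sum>y\<in>mat_left_ideal m x. w y) = (\<Sum>y\<in>mat_left_ideal m x. W0 y)"
        by (rule sum.cong[OF refl]) (use eqw ideal_carrier[OF x] in blast)
      also have "\<dots> = real (card (mat_left_ideal m x))"
        using NW0 x nz unfolding normalized_homogeneous_weight_def by blast
      finally show "(\<Sum>y\<in>mat_left_ideal m x. w y) = real (card (mat_left_ideal m x))" .
    qed
  qed
qed


end
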